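(* Let $h$ be a triangle center function whose locus over the 3-periodics of $E$ is an ellipse. Let $T_0$ be the 3-periodic with vertex $(a,0)$ and $T_{\pi/2}$ the 3-periodic with vertex $(0,b)$, and assume $X_h(T_0)$ and $X_h(T_{\pi/2})$ are defined. Then $X_h(T_0)=(\pm\alpha,0)$ and $X_h(T_{\pi/2})=(0,\pm\beta)$ for some $\alpha,\beta>0$, and the locus is the ellipse $x^2/\alpha^2+y^2/\beta^2=1$.
   Context: Fix real numbers $a>b>0$ and let $E$ be the ellipse $x^2/a^2+y^2/b^2=1$ (the elliptic billiard). A 3-periodic is a non-degenerate triangle $P_1P_2P_3$ with all vertices on $E$ such that at each vertex $P_j$ the normal line to $E$ at $P_j$ bisects the interior angle of the triangle at $P_j$. Every point of $E$ is a vertex of exactly one 3-periodic. For a triangle $P_1P_2P_3$ let $s_1=|P_2P_3|$, $s_2=|P_3P_1|$, $s_3=|P_1P_2|$. A triangle center function is a function $h(x,y,z)$ that is homogeneous and bisymmetric ($h(x,y,z)=h(x,z,y)$). The associated triangle center is $X_h=\dfrac{p s_1P_1+q s_2P_2+r s_3P_3}{p s_1+q s_2+r s_3}$ with $p=h(s_1,s_2,s_3)$, $q=h(s_2,s_3,s_1)$, $r=h(s_3,s_1,s_2)$. The locus of $X_h$ is the set of points $X_h(T)$ as $T$ ranges over all 3-periodics for which $X_h(T)$ is defined. *)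

theory Defs
  imports "HOL-Analysis.Analysis"
begin

type_synonym pt = "real \<times> real"

definition on_ellipse :: "real \<Rightarrow> real \<Rightarrow> pt \<Rightarrow> bool" where
  "on_ellipse a b P \<longleftrightarrow> (fst P)\<^sup>2 / a\<^sup>2 + (snd P)\<^sup>2 / b\<^sup>2 = 1"

definition cross :: "pt \<Rightarrow> pt \<Rightarrow> real" where
  "cross u v = fst u * snd v - snd u * fst v"

definition edist :: "pt \<Rightarrow> pt \<Rightarrow> real" where
  "edist P Q = sqrt ((fst P - fst Q)\<^sup>2 + (snd P - snd Q)\<^sup>2)"

definition unitv :: "pt \<Rightarrow> pt \<Rightarrow> pt" where
  "unitv P Q = ((fst Q - fst P) / edist P Q, (snd Q - snd P) / edist P Q)"

(* normal vector of the ellipse x^2/a^2 + y^2/b^2 = 1 at P (gradient direction) *)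
definition normal_vec :: "real \<Rightarrow> real \<Rightarrow> pt \<Rightarrow> pt" where
  "normal_vec a b P = (fst P / a\<^sup>2, snd P / b\<^sup>2)"

(* the normal line at P bisects the interior angle of triangle P Q R at P:
   the internal bisector direction (sum of unit vectors towards Q and R)
   is parallel to the normal vector *)
definition normal_bisects :: "real \<Rightarrow> real \<Rightarrow> pt \<Rightarrow> pt \<Rightarrow> pt \<Rightarrow> bool" where
  "normal_bisects a b P Q R \<longleftrightarrow>
     cross (fst (unitv P Q) + fst (unitv P R), snd (unitv P Q) + snd (unitv P R)) (normal_vec a b P) = 0"

definition nondegenerate :: "pt \<Rightarrow> pt \<Rightarrow> pt \<Rightarrow> bool" where
  "nondegenerate P1 P2 P3 \<longleftrightarrow>
     cross (fst P2 - fst P1, snd P2 - snd P1) (fst P3 - fst P1, snd P3 - snd P1) \<noteq> 0"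

definition periodic3 :: "real \<Rightarrow> real \<Rightarrow> pt \<Rightarrow> pt \<Rightarrow> pt \<Rightarrow> bool" where
  "periodic3 a b P1 P2 P3 \<longleftrightarrow>
     nondegenerate P1 P2 P3 \<and>
     on_ellipse a b P1 \<and> on_ellipse a b P2 \<and> on_ellipse a b P3 \<and>
     normal_bisects a b P1 P2 P3 \<and> normal_bisects a b P2 P3 P1 \<and> normal_bisects a b P3 P1 P2"

(* triangle center function: homogeneous (of some real degree) and bisymmetric,
   on triples of positive reals (side lengths) *)
definition center_fun :: "(real \<Rightarrow> real \<Rightarrow> real \<Rightarrow> real) \<Rightarrow> bool" where
  "center_fun h \<longleftrightarrow>
     (\<exists>k::real. \<forall>t x y z. t > 0 \<longrightarrow> x > 0 \<longrightarrow> y > 0 \<longrightarrow> z > 0 \<longrightarrow>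
        h (t * x) (t * y) (t * z) = t powr k * h x y z) \<and>
     (\<forall>x y z. x > 0 \<longrightarrow> y > 0 \<longrightarrow> z > 0 \<longrightarrow> h x y z = h x z y)"

definition center_weights :: "(real \<Rightarrow> real \<Rightarrow> real \<Rightarrow> real) \<Rightarrow> pt \<Rightarrow> pt \<Rightarrow> pt \<Rightarrow> real \<times> real \<times> real" where
  "center_weights h P1 P2 P3 =
     (let s1 = edist P2 P3; s2 = edist P3 P1; s3 = edist P1 P2
      in (h s1 s2 s3 * s1, h s2 s3 s1 * s2, h s3 s1 s2 * s3))"

definition center_defined :: "(real \<Rightarrow> real \<Rightarrow> real \<Rightarrow> real) \<Rightarrow> pt \<Rightarrow> pt \<Rightarrow> pt \<Rightarrow> bool" where
  "center_defined h P1 P2 P3 \<longleftrightarrow>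
     (case center_weights h P1 P2 P3 of (w1, w2, w3) \<Rightarrow> w1 + w2 + w3 \<noteq> 0)"

definition center :: "(real \<Rightarrow> real \<Rightarrow> real \<Rightarrow> real) \<Rightarrow> pt \<Rightarrow> pt \<Rightarrow> pt \<Rightarrow> pt" where
  "center h P1 P2 P3 =
     (case center_weights h P1 P2 P3 of (w1, w2, w3) \<Rightarrow>
        ((w1 * fst P1 + w2 * fst P2 + w3 * fst P3) / (w1 + w2 + w3),
         (w1 * snd P1 + w2 * snd P2 + w3 * snd P3) / (w1 + w2 + w3)))"

definition locus :: "real \<Rightarrow> real \<Rightarrow> (real \<Rightarrow> real \<Rightarrow> real \<Rightarrow> real) \<Rightarrow> pt set" where
  "locus a b h = {center h P1 P2 P3 | P1 P2 P3.
                    periodic3 a b P1 P2 P3 \<and> center_defined h P1 P2 P3}"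

definition is_ellipse :: "pt set \<Rightarrow> bool" where
  "is_ellipse S \<longleftrightarrow>
     (\<exists>c1 c2 \<theta> A B. A > 0 \<and> B > 0 \<and>
        S = {(c1 + A * cos t * cos \<theta> - B * sin t * sin \<theta>,
              c2 + A * cos t * sin \<theta> + B * sin t * cos \<theta>) | t. True})"

end

theory Submission
  imports Defs
begin


definition rx :: "pt \<Rightarrow> pt" where "rx P = (fst P, - snd P)"
definition ry :: "pt \<Rightarrow> pt" where "ry P = (- fst P, snd P)"

lemma edist_rx[simp]: "edist (rx P) (rx Q) = edist P Q"
  by (simp add: edist_def rx_def power2_eq_square algebra_simps)
lemma edist_ry[simp]: "edist (ry P) (ry Q) = edist P Q"
  by (simp add: edist_def ry_def power2_eq_square algebra_simps)

lemma unitv_rx: "unitv (rx P) (rx Q) = rx (unitv P Q)"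
  unfolding unitv_def edist_rx by (simp add: rx_def) (simp add: minus_divide_left)
lemma unitv_ry: "unitv (ry P) (ry Q) = ry (unitv P Q)"
  unfolding unitv_def edist_ry by (simp add: ry_def) (simp add: minus_divide_left)

lemma nb_rx: "normal_bisects a b (rx P) (rx Q) (rx R) = normal_bisects a b P Q R"
  unfolding normal_bisects_def unitv_rx by (simp add: rx_def cross_def normal_vec_def algebra_simps eq_commute)
lemma nb_ry: "normal_bisects a b (ry P) (ry Q) (ry R) = normal_bisects a b P Q R"
  unfolding normal_bisects_def unitv_ry by (simp add: ry_def cross_def normal_vec_def algebra_simps eq_commute)

lemma nd_rx: "nondegenerate (rx P1) (rx P2) (rx P3) = nondegenerate P1 P2 P3"
proof -
  have "cross (fst (rx P2) - fst (rx P1), snd (rx P2) - snd (rx P1)) (fst (rx P3) - fst (rx P1), snd (rx P3) - snd (rx P1))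
    = - cross (fst P2 - fst P1, snd P2 - snd P1) (fst P3 - fst P1, snd P3 - snd P1)"
    by (simp add: cross_def rx_def algebra_simps)
  thus ?thesis unfolding nondegenerate_def by simp
qed
lemma oe_rx: "on_ellipse a b (rx P) = on_ellipse a b P"
  by (simp add: on_ellipse_def rx_def)
lemma periodic3_rx: "periodic3 a b P1 P2 P3 \<Longrightarrow> periodic3 a b (rx P1) (rx P2) (rx P3)"
  unfolding periodic3_def nb_rx nd_rx oe_rx by simp
lemma nd_ry: "nondegenerate (ry P1) (ry P2) (ry P3) = nondegenerate P1 P2 P3"
proof -
  have "cross (fst (ry P2) - fst (ry P1), snd (ry P2) - snd (ry P1)) (fst (ry P3) - fst (ry P1), snd (ry P3) - snd (ry P1))
    = - cross (fst P2 - fst P1, snd P2 - snd P1) (fst P3 - fst P1, snd P3 - snd P1)"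
    by (simp add: cross_def ry_def algebra_simps)
  thus ?thesis unfolding nondegenerate_def by simp
qed
lemma oe_ry: "on_ellipse a b (ry P) = on_ellipse a b P"
  by (simp add: on_ellipse_def ry_def)
lemma periodic3_ry: "periodic3 a b P1 P2 P3 \<Longrightarrow> periodic3 a b (ry P1) (ry P2) (ry P3)"
  unfolding periodic3_def nb_ry nd_ry oe_ry by simp

lemma cw_rx: "center_weights h (rx P1) (rx P2) (rx P3) = center_weights h P1 P2 P3"
  by (simp add: center_weights_def)
lemma cw_ry: "center_weights h (ry P1) (ry P2) (ry P3) = center_weights h P1 P2 P3"
  by (simp add: center_weights_def)

lemma center_rx: "center h (rx P1) (rx P2) (rx P3) = rx (center h P1 P2 P3)"
proof -
  obtain w1 w2 w3 where w: "center_weights h P1 P2 P3 = (w1,w2,w3)" by (metis prod.exhaust)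
  have e: "w1 * - snd P1 + w2 * - snd P2 + w3 * - snd P3 = - (w1 * snd P1 + w2 * snd P2 + w3 * snd P3)"
    by (simp add: algebra_simps)
  show ?thesis unfolding center_def cw_rx w prod.case unfolding rx_def
    by (simp only: prod.case fst_conv snd_conv e minus_divide_left)
qed
lemma center_ry: "center h (ry P1) (ry P2) (ry P3) = ry (center h P1 P2 P3)"
proof -
  obtain w1 w2 w3 where w: "center_weights h P1 P2 P3 = (w1,w2,w3)" by (metis prod.exhaust)
  have e: "w1 * - fst P1 + w2 * - fst P2 + w3 * - fst P3 = - (w1 * fst P1 + w2 * fst P2 + w3 * fst P3)"
    by (simp add: algebra_simps)
  show ?thesis unfolding center_def cw_ry w prod.case unfolding ry_def
    by (simp only: prod.case fst_conv snd_conv e minus_divide_left)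
qed

lemma locus_rx: assumes "p \<in> locus a b h" shows "rx p \<in> locus a b h"
proof -
  obtain P1 P2 P3 where p: "p = center h P1 P2 P3" and per: "periodic3 a b P1 P2 P3"
    and cd: "center_defined h P1 P2 P3" using assms unfolding locus_def by blast
  have "periodic3 a b (rx P1) (rx P2) (rx P3)" using per by (rule periodic3_rx)
  moreover have "center_defined h (rx P1) (rx P2) (rx P3)" using cd
    unfolding center_defined_def cw_rx .
  moreover have "rx p = center h (rx P1) (rx P2) (rx P3)" unfolding p center_rx ..
  ultimately show ?thesis unfolding locus_def by blast
qed
lemma locus_ry: assumes "p \<in> locus a b h" shows "ry p \<in> locus a b h"
proof -
  obtain P1 P2 P3 where p: "p = center h P1 P2 P3" and per: "periodic3 a b P1 P2 P3"
    and cd: "center_defined h P1 P2 P3" using assms unfolding locus_def by blast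
  have "periodic3 a b (ry P1) (ry P2) (ry P3)" using per by (rule periodic3_ry)
  moreover have "center_defined h (ry P1) (ry P2) (ry P3)" using cd
    unfolding center_defined_def cw_ry .
  moreover have "ry p = center h (ry P1) (ry P2) (ry P3)" unfolding p center_ry ..
  ultimately show ?thesis unfolding locus_def by blast
qed



lemma T0_sym:
  assumes ap: "a > 0" and bp: "b > 0" and per: "periodic3 a b (a,0) (x2,y2) (x3,y3)"
  shows "x3 = x2 \<and> y3 = - y2"
proof -
  define d2 where "d2 = sqrt ((a-x2)^2 + (0-y2)^2)"
  define d3 where "d3 = sqrt ((a-x3)^2 + (0-y3)^2)"
  have nd: "(x2-a)*y3 - y2*(x3-a) \<noteq> 0"
    using per by (simp add: periodic3_def nondegenerate_def cross_def)
  have e2: "x2^2/a^2 + y2^2/b^2 = 1" and e3: "x3^2/a^2 + y3^2/b^2 = 1"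
    using per by (simp_all add: periodic3_def on_ellipse_def)
  have bis: "(y2/d2 + y3/d3) * (a/a^2) = 0"
    using per by (simp add: periodic3_def normal_bisects_def cross_def unitv_def
        normal_vec_def edist_def d2_def d3_def)
  hence bis': "y2/d2 + y3/d3 = 0" using ap by simp
  have d2sq: "d2^2 = (x2-a)^2 + y2^2" unfolding d2_def by (simp add: power2_commute)
  have d3sq: "d3^2 = (x3-a)^2 + y3^2" unfolding d3_def by (simp add: power2_commute)
  have d2p: "d2 > 0"
  proof -
    have "d2 \<ge> 0" unfolding d2_def by simp
    moreover have "d2 \<noteq> 0"
    proof
      assume "d2 = 0" hence "x2 = a" "y2 = 0" using d2sq by (simp_all add: sum_power2_eq_zero_iff)
      thus False using nd by simp
    qed
    ultimately show ?thesis by simp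
  qed
  have d3p: "d3 > 0"
  proof -
    have "d3 \<ge> 0" unfolding d3_def by simp
    moreover have "d3 \<noteq> 0"
    proof
      assume "d3 = 0" hence "x3 = a" "y3 = 0" using d3sq by (simp_all add: sum_power2_eq_zero_iff)
      thus False using nd by simp
    qed
    ultimately show ?thesis by simp
  qed
  define k where "k = d3/d2"
  have kp: "k > 0" using d2p d3p by (simp add: k_def)
  have d3k: "d3 = k * d2" using d2p by (simp add: k_def)
  have y3k: "y3 = - k * y2" using bis' d2p d3p by (simp add: k_def field_simps)
  have "(x3-a)^2 = (k*(x2-a))^2"
  proof -
    have "(x3-a)^2 = d3^2 - y3^2" using d3sq by simp
    also have "\<dots> = k^2 * (d2^2 - y2^2)" using d3k y3k by (simp add: power_mult_distrib algebra_simps)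
    also have "\<dots> = (k*(x2-a))^2" using d2sq by (simp add: power_mult_distrib)
    finally show ?thesis .
  qed
  hence "x3 - a = k*(x2-a) \<or> x3 - a = - (k*(x2-a))" by (simp add: power2_eq_iff)
  moreover have "x3 - a \<noteq> - (k*(x2-a))"
  proof
    assume "x3 - a = - (k*(x2-a))"
    hence "x3 = a - k*(x2-a)" by simp
    hence "(x2-a)*y3 - y2*(x3-a) = 0" using y3k by (simp only:) (simp add: algebra_simps)
    thus False using nd by simp
  qed
  ultimately have x3k: "x3 = a + k*(x2-a)" by simp
  define X where "X = x2 - a"
  define Q where "Q = X^2/a^2 + y2^2/b^2"
  have Qp: "Q > 0"
  proof -
    have "X \<noteq> 0 \<or> y2 \<noteq> 0" using nd by (auto simp: X_def)
    thus ?thesis unfolding Q_def using ap bp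
      by (auto intro: add_pos_nonneg add_nonneg_pos)
  qed
  have E2: "2*X/a + Q = 0"
  proof -
    have "(a+X)^2/a^2 + y2^2/b^2 = 1" using e2 by (simp add: X_def)
    thus ?thesis using ap unfolding Q_def by (simp add: field_simps power2_eq_square) 
  qed
  have E3: "k*(2*X/a + k*Q) = 0"
  proof -
    have "(a+k*X)^2/a^2 + (k*y2)^2/b^2 = 1" using e3 x3k y3k by (simp add: X_def)
    thus ?thesis using ap unfolding Q_def by (simp add: field_simps power2_eq_square) 
  qed
  hence "2*X/a + k*Q = 0" using kp by simp
  with E2 have "k*Q = Q" by linarith
  hence "(k - 1) * Q = 0" by (simp add: algebra_simps)
  hence "k = 1" using Qp by simp
  thus ?thesis using x3k y3k by simp
qed



lemma ellipse_sym:
  assumes ell: "is_ellipse S" and sx: "\<And>x y. (x,y) \<in> S \<Longrightarrow> (x, -y) \<in> S"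
    and sy: "\<And>x y. (x,y) \<in> S \<Longrightarrow> (-x, y) \<in> S"
  shows "\<exists>\<alpha> \<beta>. \<alpha> > 0 \<and> \<beta> > 0 \<and> S = {(x,y). x\<^sup>2/\<alpha>\<^sup>2 + y\<^sup>2/\<beta>\<^sup>2 = 1}"
proof -
  obtain c1 c2 \<theta> A B where Ap: "A > 0" and Bp: "B > 0" and Seq:
    "S = {(c1 + A * cos t * cos \<theta> - B * sin t * sin \<theta>,
              c2 + A * cos t * sin \<theta> + B * sin t * cos \<theta>) | t. True}"
    using ell unfolding is_ellipse_def by blast
  define cs where "cs = cos \<theta>"
  define vs where "vs = sin \<theta>"
  have cs1: "cs^2 + vs^2 = 1" by (simp add: cs_def vs_def)
  define g where "g x y = (x* cs + y* vs)^2/A^2 + (-x* vs + y* cs)^2/B^2" for x y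
  have gpar: "g (u1+v1) (u2+v2) + g (u1-v1) (u2-v2) = 2 * g u1 u2 + 2 * g v1 v2" for u1 u2 v1 v2
    unfolding g_def using Ap Bp by (simp add: field_simps power2_eq_square)
  have gneg: "g (-x) (-y) = g x y" for x y
    unfolding g_def by (simp add: power2_eq_square algebra_simps)
  have mem: "(x,y) \<in> S \<longleftrightarrow> g (x-c1) (y-c2) = 1" for x y
  proof
    assume "(x,y) \<in> S"
    then obtain t where xy: "x = c1 + A * cos t * cs - B * sin t * vs"
        "y = c2 + A * cos t * vs + B * sin t * cs" unfolding Seq cs_def vs_def by auto
    have 1: "(x-c1)* cs + (y-c2)* vs = A * cos t"
    proof -
      have "(x-c1)* cs + (y-c2)* vs = A * cos t * (cs^2+vs^2)"
        unfolding xy by (simp add: algebra_simps power2_eq_square)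
      thus ?thesis using cs1 by simp
    qed
    have 2: "-(x-c1)* vs + (y-c2)* cs = B * sin t"
    proof -
      have "-(x-c1)* vs + (y-c2)* cs = B * sin t * (cs^2+vs^2)"
        unfolding xy by (simp add: algebra_simps power2_eq_square)
      thus ?thesis using cs1 by simp
    qed
    show "g (x-c1) (y-c2) = 1" unfolding g_def 1 2 using Ap Bp
      by (simp add: power_mult_distrib)
  next
    assume g1: "g (x-c1) (y-c2) = 1"
    define X where "X = ((x-c1)* cs + (y-c2)* vs)/A"
    define Y where "Y = (-(x-c1)* vs + (y-c2)* cs)/B"
    have "X^2 + Y^2 = 1" using g1 unfolding g_def X_def Y_def by (simp add: power_divide)
    then obtain t where t: "X = cos t" "Y = sin t" using sincos_total_2pi by metis
    have ex: "x = c1 + A * X * cs - B * Y * vs"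
    proof -
      have "A * X * cs - B * Y * vs = (x-c1)*(cs^2+vs^2)"
        using Ap Bp by (simp add: X_def Y_def field_simps power2_eq_square)
      thus ?thesis using cs1 by simp
    qed
    have ey: "y = c2 + A * X * vs + B * Y * cs"
    proof -
      have "A * X * vs + B * Y * cs = (y-c2)*(cs^2+vs^2)"
        using Ap Bp by (simp add: X_def Y_def field_simps power2_eq_square)
      thus ?thesis using cs1 by simp
    qed
    show "(x,y) \<in> S" unfolding Seq using ex ey t by (auto simp: cs_def vs_def)
  qed
  have gA: "g (A* cs) (A* vs) = 1"
  proof -
    have "A* cs* cs + A* vs* vs = A * (cs^2 + vs^2)" by (simp add: power2_eq_square algebra_simps)
    hence "A* cs* cs + A* vs* vs = A" using cs1 by simp
    moreover have "-(A* cs)* vs + A* vs* cs = 0" by simp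
    ultimately show ?thesis unfolding g_def using Ap by simp
  qed
  have pref: "(x,y) \<in> S \<Longrightarrow> (-x,-y) \<in> S" for x y using sx sy by blast
  have "(c1 + A* cs, c2 + A* vs) \<in> S" using mem gA by simp
  hence "(-(c1 + A* cs), -(c2 + A* vs)) \<in> S" by (rule pref)
  hence "g (-(c1 + A* cs) - c1) (-(c2 + A* vs) - c2) = 1" using mem by blast
  moreover have "-(c1 + A* cs) - c1 = -2*c1 - A* cs" "-(c2 + A* vs) - c2 = -2*c2 - A* vs" by simp_all
  ultimately have m1: "g (-2*c1 - A* cs) (-2*c2 - A* vs) = 1" by simp
  have "(c1 - A* cs, c2 - A* vs) \<in> S" using mem gA gneg[of "A* cs" "A* vs"] by simp
  hence "(-(c1 - A* cs), -(c2 - A* vs)) \<in> S" by (rule pref)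
  hence "g (-(c1 - A* cs) - c1) (-(c2 - A* vs) - c2) = 1" using mem by blast
  moreover have "-(c1 - A* cs) - c1 = -2*c1 + A* cs" "-(c2 - A* vs) - c2 = -2*c2 + A* vs" by simp_all
  ultimately have m2: "g (-2*c1 + A* cs) (-2*c2 + A* vs) = 1" by simp
  have P: "g (-2*c1 + -(A* cs)) (-2*c2 + -(A* vs)) + g (-2*c1 - -(A* cs)) (-2*c2 - -(A* vs))
       = 2*g (-2*c1) (-2*c2) + 2*g (-(A* cs)) (-(A* vs))" by (rule gpar)
  hence P': "g (-2*c1 - A* cs) (-2*c2 - A* vs) + g (-2*c1 + A* cs) (-2*c2 + A* vs)
       = 2*g (-2*c1) (-2*c2) + 2*g (-(A* cs)) (-(A* vs))"
    by (simp only: add_uminus_conv_diff diff_minus_eq_add)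
  have "g (-(A* cs)) (-(A* vs)) = 1" using gneg gA by simp
  hence "g (-2*c1) (-2*c2) = 0" using P' m1 m2 by linarith
  hence "(-2*c1* cs + -2*c2* vs)^2/A^2 + (2*c1* vs + -2*c2* cs)^2/B^2 = 0" unfolding g_def by simp
  hence z1: "c1* cs + c2* vs = 0" and z2: "c1* vs - c2* cs = 0" using Ap Bp
    by (simp_all add: add_nonneg_eq_0_iff algebra_simps)
  have c1z: "c1 = 0"
  proof -
    have "c1 = c1*(cs^2+vs^2)" using cs1 by simp
    also have "\<dots> = cs*(c1* cs + c2* vs) + vs*(c1* vs - c2* cs)" by (simp add: algebra_simps power2_eq_square)
    finally show ?thesis using z1 z2 by simp
  qed
  have c2z: "c2 = 0"
  proof -
    have "c2 = c2*(cs^2+vs^2)" using cs1 by simp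
    also have "\<dots> = vs*(c1* cs + c2* vs) - cs*(c1* vs - c2* cs)" by (simp add: algebra_simps power2_eq_square)
    finally show ?thesis using z1 z2 by simp
  qed
  have mem0: "(x,y) \<in> S \<longleftrightarrow> g x y = 1" for x y using mem c1z c2z by simp
  define m11 where "m11 = cs^2/A^2 + vs^2/B^2"
  define m12 where "m12 = cs* vs*(1/A^2 - 1/B^2)"
  define m22 where "m22 = vs^2/A^2 + cs^2/B^2"
  have gm: "g x y = m11*x^2 + 2*m12*x*y + m22*y^2" for x y
    unfolding g_def m11_def m12_def m22_def using Ap Bp
    by (simp add: field_simps power2_eq_square)
  have m11p: "m11 > 0"
  proof -
    have "cs \<noteq> 0 \<or> vs \<noteq> 0" using cs1 by auto
    thus ?thesis unfolding m11_def using Ap Bp by (auto intro: add_pos_nonneg add_nonneg_pos)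
  qed
  have m22p: "m22 > 0"
  proof -
    have "cs \<noteq> 0 \<or> vs \<noteq> 0" using cs1 by auto
    thus ?thesis unfolding m22_def using Ap Bp by (auto intro: add_pos_nonneg add_nonneg_pos)
  qed
  have G11: "g 1 1 > 0"
  proof -
    have "cs + vs \<noteq> 0 \<or> - vs + cs \<noteq> 0" using cs1 by auto
    thus ?thesis unfolding g_def using Ap Bp by (auto intro: add_pos_nonneg add_nonneg_pos)
  qed
  define s where "s = 1 / sqrt (g 1 1)"
  have s2: "s^2 * g 1 1 = 1" using G11 by (simp add: s_def power_divide)
  have "g s s = s^2 * g 1 1" using gm[of s s] gm[of 1 1] by (simp add: algebra_simps power2_eq_square)
  hence "(s,s) \<in> S" using s2 mem0 by simp
  hence "(s,-s) \<in> S" using sx by blast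
  hence "g s (-s) = 1" using mem0 by simp
  hence "s^2 * (m11 - 2*m12 + m22) = s^2 * (m11 + 2*m12 + m22)"
    using s2 gm[of s "-s"] gm[of 1 1] by (simp add: algebra_simps power2_eq_square)
  moreover have "s^2 > 0" using G11 by (simp add: s_def)
  ultimately have m12z: "m12 = 0" by simp
  define \<alpha> where "\<alpha> = 1 / sqrt m11"
  define \<beta> where "\<beta> = 1 / sqrt m22"
  have a2: "\<alpha>^2 = 1/m11" using m11p by (simp add: \<alpha>_def power_divide)
  have b2: "\<beta>^2 = 1/m22" using m22p by (simp add: \<beta>_def power_divide)
  have "S = {(x,y). x\<^sup>2/\<alpha>\<^sup>2 + y\<^sup>2/\<beta>\<^sup>2 = 1}"
    using mem0 gm m12z a2 b2 by (auto simp: mult.commute)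
  moreover have "\<alpha> > 0" "\<beta> > 0" using m11p m22p by (simp_all add: \<alpha>_def \<beta>_def)
  ultimately show ?thesis by blast
qed



definition sw :: "pt \<Rightarrow> pt" where "sw P = (snd P, fst P)"

lemma edist_sw[simp]: "edist (sw P) (sw Q) = edist P Q"
  by (simp add: edist_def sw_def add.commute)
lemma unitv_sw: "unitv (sw P) (sw Q) = sw (unitv P Q)"
  unfolding unitv_def edist_sw by (simp add: sw_def)
lemma nb_sw: "normal_bisects b a (sw P) (sw Q) (sw R) = normal_bisects a b P Q R"
  unfolding normal_bisects_def unitv_sw by (simp add: sw_def cross_def normal_vec_def algebra_simps eq_commute)
lemma periodic3_sw: "periodic3 a b P1 P2 P3 \<Longrightarrow> periodic3 b a (sw P1) (sw P2) (sw P3)"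
  unfolding periodic3_def nb_sw
  by (auto simp: nondegenerate_def on_ellipse_def cross_def sw_def algebra_simps)
lemma cw_sw: "center_weights h (sw P1) (sw P2) (sw P3) = center_weights h P1 P2 P3"
  by (simp add: center_weights_def)
lemma center_sw: "center h (sw P1) (sw P2) (sw P3) = sw (center h P1 P2 P3)"
  unfolding center_def cw_sw by (auto simp: sw_def split: prod.splits)

lemma T90_sym:
  assumes ap: "a > 0" and bp: "b > 0" and per: "periodic3 a b (0,b) (x2,y2) (x3,y3)"
  shows "x3 = - x2 \<and> y3 = y2"
proof -
  have "periodic3 b a (sw (0,b)) (sw (x2,y2)) (sw (x3,y3))" using per by (rule periodic3_sw)
  hence "periodic3 b a (b,0) (y2,x2) (y3,x3)" by (simp add: sw_def)
  thus ?thesis using T0_sym[OF bp ap] by blast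
qed

lemma center_x:
  assumes hc: "center_fun h" and per: "periodic3 a b (a,0) (x2,y2) (x2,-y2)"
  shows "snd (center h (a,0) (x2,y2) (x2,-y2)) = 0"
proof -
  have nd: "(x2-a)*(-y2) - y2*(x2-a) \<noteq> 0"
    using per by (simp add: periodic3_def nondegenerate_def cross_def)
  hence y2: "y2 \<noteq> 0" and x2: "x2 \<noteq> a" by auto
  define s1 where "s1 = edist (x2,y2) (x2,-y2)"
  define s where "s = edist (a,0) (x2,y2)"
  have s2: "edist (x2,-y2) (a,0) = s" unfolding s_def edist_def by (simp add: power2_commute)
  have s1p: "s1 > 0" unfolding s1_def edist_def using y2 by simp
  have sp: "s > 0" unfolding s_def edist_def using x2 by (simp add: add_pos_nonneg)
  have bs: "h s s1 s = h s s s1" using hc sp s1p unfolding center_fun_def by blast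
  show ?thesis
    unfolding center_def center_weights_def Let_def s2 s1_def[symmetric] s_def[symmetric]
    by (simp add: bs algebra_simps)
qed

lemma center_y:
  assumes hc: "center_fun h" and per: "periodic3 a b (0,b) (x2,y2) (-x2,y2)"
  shows "fst (center h (0,b) (x2,y2) (-x2,y2)) = 0"
proof -
  have "periodic3 b a (sw (0,b)) (sw (x2,y2)) (sw (-x2,y2))" using per by (rule periodic3_sw)
  hence "periodic3 b a (b,0) (y2,x2) (y2,-x2)" by (simp add: sw_def)
  hence "snd (center h (b,0) (y2,x2) (y2,-x2)) = 0" by (rule center_x[OF hc])
  moreover have "center h (b,0) (y2,x2) (y2,-x2) = sw (center h (0,b) (x2,y2) (-x2,y2))"
    using center_sw[of h "(0,b)" "(x2,y2)" "(-x2,y2)"] by (simp add: sw_def)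
  ultimately show ?thesis by (simp add: sw_def)
qed


theorem mainTheorem5:
  fixes a b :: real and h :: "real \<Rightarrow> real \<Rightarrow> real \<Rightarrow> real"
  assumes "a > b" and "b > 0"
    and "center_fun h"
    and "is_ellipse (locus a b h)"
    and "\<forall>P2 P3. periodic3 a b (a, 0) P2 P3 \<longrightarrow> center_defined h (a, 0) P2 P3"
    and "\<forall>P2 P3. periodic3 a b (0, b) P2 P3 \<longrightarrow> center_defined h (0, b) P2 P3"
  shows "\<exists>\<alpha> \<beta>. \<alpha> > 0 \<and> \<beta> > 0 \<and>
    (\<forall>P2 P3. periodic3 a b (a, 0) P2 P3 \<longrightarrow>
        center h (a, 0) P2 P3 = (\<alpha>, 0) \<or> center h (a, 0) P2 P3 = (- \<alpha>, 0)) \<and>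
    (\<forall>P2 P3. periodic3 a b (0, b) P2 P3 \<longrightarrow>
        center h (0, b) P2 P3 = (0, \<beta>) \<or> center h (0, b) P2 P3 = (0, - \<beta>)) \<and>
    locus a b h = {(x, y). x\<^sup>2 / \<alpha>\<^sup>2 + y\<^sup>2 / \<beta>\<^sup>2 = 1}"
proof -
  have ap: "a > 0" using assms(1,2) by simp
  have bp: "b > 0" by (rule assms(2))
  have sx: "(x, -y) \<in> locus a b h" if "(x,y) \<in> locus a b h" for x y
    using locus_rx[OF that] by (simp add: rx_def)
  have sy: "(-x, y) \<in> locus a b h" if "(x,y) \<in> locus a b h" for x y
    using locus_ry[OF that] by (simp add: ry_def)
  obtain \<alpha> \<beta> where al: "\<alpha> > 0" and be: "\<beta> > 0"
    and L: "locus a b h = {(x,y). x\<^sup>2/\<alpha>\<^sup>2 + y\<^sup>2/\<beta>\<^sup>2 = 1}"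
    using ellipse_sym[OF assms(4) sx sy] by blast
  have T0: "center h (a, 0) P2 P3 = (\<alpha>, 0) \<or> center h (a, 0) P2 P3 = (- \<alpha>, 0)"
    if per: "periodic3 a b (a, 0) P2 P3" for P2 P3
  proof -
    obtain x2 y2 x3 y3 where P: "P2 = (x2,y2)" "P3 = (x3,y3)" by (cases P2, cases P3)
    have "x3 = x2 \<and> y3 = - y2" using T0_sym[OF ap bp] per P by simp
    hence P3: "P3 = (x2, -y2)" using P by simp
    define c where "c = center h (a, 0) P2 P3"
    have "c \<in> locus a b h" unfolding locus_def c_def using per assms(5) by blast
    hence ce: "(fst c)\<^sup>2/\<alpha>\<^sup>2 + (snd c)\<^sup>2/\<beta>\<^sup>2 = 1" using L by (cases c) auto
    have per': "periodic3 a b (a,0) (x2,y2) (x2,-y2)" using per P(1) P3 by simp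
    have "snd c = 0" using center_x[OF assms(3) per'] unfolding c_def P(1) P3 .
    hence "(fst c)\<^sup>2 = \<alpha>\<^sup>2" using ce al by simp
    hence "fst c = \<alpha> \<or> fst c = - \<alpha>" by (simp add: power2_eq_iff)
    thus ?thesis using \<open>snd c = 0\<close> unfolding c_def by (cases "center h (a, 0) P2 P3") auto
  qed
  have T90: "center h (0, b) P2 P3 = (0, \<beta>) \<or> center h (0, b) P2 P3 = (0, - \<beta>)"
    if per: "periodic3 a b (0, b) P2 P3" for P2 P3
  proof -
    obtain x2 y2 x3 y3 where P: "P2 = (x2,y2)" "P3 = (x3,y3)" by (cases P2, cases P3)
    have "x3 = - x2 \<and> y3 = y2" using T90_sym[OF ap bp] per P by simp
    hence P3: "P3 = (-x2, y2)" using P by simp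
    define c where "c = center h (0, b) P2 P3"
    have "c \<in> locus a b h" unfolding locus_def c_def using per assms(6) by blast
    hence ce: "(fst c)\<^sup>2/\<alpha>\<^sup>2 + (snd c)\<^sup>2/\<beta>\<^sup>2 = 1" using L by (cases c) auto
    have per': "periodic3 a b (0,b) (x2,y2) (-x2,y2)" using per P(1) P3 by simp
    have "fst c = 0" using center_y[OF assms(3) per'] unfolding c_def P(1) P3 .
    hence "(snd c)\<^sup>2 = \<beta>\<^sup>2" using ce be by simp
    hence "snd c = \<beta> \<or> snd c = - \<beta>" by (simp add: power2_eq_iff)
    thus ?thesis using \<open>fst c = 0\<close> unfolding c_def by (cases "center h (0, b) P2 P3") auto
  qed
  show ?thesis using al be T0 T90 L by blast
qed

end
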